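(* Define \[ \nu_1(z;q):=\sum_{n=0}^{\infty} \frac{z^n q^{n^2+n}}{(-q;q^2)_{n+1}}. \] Then, as formal power series in $q$ whose coefficients are polynomials in $z$ (equivalently, for $|q|<1$ and $z$ in a suitable region of convergence), \[ \nu_1(z;q)=\sum_{n=0}^{\infty} (zq;q^2)_n\,(-q)^n . \]
   Context: For $a$ and $q$, $(a;q)_0:=1$, $(a;q)_n:=(1-a)(1-aq)\cdots(1-aq^{n-1})$ for $n\ge1$. *)

theory Defs
  imports "HOL-Analysis.Analysis"
begin

definition qpoch :: "complex \<Rightarrow> complex \<Rightarrow> nat \<Rightarrow> complex" where
  "qpoch a q n = (\<Prod>k<n. (1 - a * q ^ k))"

definition nu1 :: "complex \<Rightarrow> complex \<Rightarrow> complex" where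
  "nu1 z q = (\<Sum>n. z ^ n * q ^ (n\<^sup>2 + n) / qpoch (- q) (q\<^sup>2) (n + 1))"

end

theory Submission imports Defs begin

lemma qpoch_Suc: "qpoch a p (Suc n) = qpoch a p n * (1 - a * p ^ n)"
  by (simp add: qpoch_def)

lemma qpoch_nz:
  assumes "norm p < 1" "norm t < 1"
  shows "qpoch t p n \<noteq> 0"
proof -
  have "1 - t * p ^ k \<noteq> 0" for k
  proof
    assume "1 - t * p ^ k = 0"
    hence "t * p ^ k = 1" by simp
    hence "norm (t * p ^ k) = 1" by simp
    hence e1: "norm t * norm p ^ k = 1" by (simp add: norm_mult norm_power)
    have "norm p ^ k \<le> 1" using assms by (simp add: power_le_one)
    hence "norm t * norm p ^ k \<le> norm t" by (rule mult_left_le) simp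
    thus False using assms e1 by linarith
  qed
  thus ?thesis by (simp add: qpoch_def)
qed

lemma qpoch_bound:
  assumes "norm p < 1"
  shows "norm (qpoch a p n) \<le> exp (norm a / (1 - norm p))"
proof -
  have "norm (qpoch a p n) \<le> (\<Prod>k<n. norm (1 - a * p ^ k))"
    unfolding qpoch_def by (rule norm_prod_le)
  also have "\<dots> \<le> (\<Prod>k<n. exp (norm a * norm p ^ k))"
  proof (rule prod_mono, safe)
    fix k
    have "norm (1 - a * p ^ k) \<le> 1 + norm a * norm p ^ k"
      using norm_triangle_ineq4[of 1 "a * p ^ k"] by (simp add: norm_mult norm_power)
    also have "\<dots> \<le> exp (norm a * norm p ^ k)" by (rule exp_ge_add_one_self)
    finally show "norm (1 - a * p ^ k) \<le> exp (norm a * norm p ^ k)" .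
  qed simp
  also have "\<dots> = exp (\<Sum>k<n. norm a * norm p ^ k)" by (simp add: exp_sum)
  also have "\<dots> \<le> exp (norm a / (1 - norm p))"
  proof -
    have "(\<Sum>k<n. norm a * norm p ^ k) = norm a * ((1 - norm p ^ n) / (1 - norm p))"
      using assms by (simp add: sum_distrib_left[symmetric] sum_gp_strict)
    also have "\<dots> \<le> norm a * (1 / (1 - norm p))"
      using assms by (intro mult_left_mono divide_right_mono) auto
    finally show ?thesis by simp
  qed
  finally show ?thesis .
qed

definition GG :: "complex \<Rightarrow> complex \<Rightarrow> complex \<Rightarrow> complex" where
  "GG a p s = (\<Sum>n. qpoch a p n * s ^ n)"

lemma GG_summable:
  assumes "norm p < 1" "norm s < 1"
  shows "summable (\<lambda>n. norm (qpoch a p n * s ^ n))"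
proof -
  define B where "B = exp (norm a / (1 - norm p))"
  have "summable (\<lambda>n. B * norm s ^ n)" using assms by (simp add: summable_geometric)
  moreover have "norm (norm (qpoch a p n * s ^ n)) \<le> B * norm s ^ n" for n
    using qpoch_bound[OF assms(1), of a n] unfolding B_def
    by (simp add: norm_mult norm_power mult_right_mono)
  ultimately show ?thesis by (rule summable_comparison_test'[where N=0]) 
qed

lemma GG_sums:
  assumes "norm p < 1" "norm s < 1"
  shows "(\<lambda>n. qpoch a p n * s ^ n) sums GG a p s"
  unfolding GG_def by (rule summable_sums[OF summable_norm_cancel[OF GG_summable[OF assms]]])

lemma GG_bound:
  assumes "norm p < 1" "norm s \<le> r" "r < 1"
  shows "norm (GG a p s) \<le> exp (norm a / (1 - norm p)) / (1 - r)"
proof -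
  define B where "B = exp (norm a / (1 - norm p))"
  have s1: "norm s < 1" using assms by simp
  have r0: "0 \<le> r" using assms norm_ge_zero[of s] by linarith
  have "norm (GG a p s) \<le> (\<Sum>n. norm (qpoch a p n * s ^ n))"
    unfolding GG_def by (rule summable_norm[OF GG_summable[OF assms(1) s1]])
  also have "\<dots> \<le> (\<Sum>n. B * r ^ n)"
  proof (rule suminf_le)
    show "norm (qpoch a p n * s ^ n) \<le> B * r ^ n" for n
      using qpoch_bound[OF assms(1), of a n] unfolding B_def
      by (auto simp: norm_mult norm_power intro!: mult_mono power_mono assms)
    show "summable (\<lambda>n. norm (qpoch a p n * s ^ n))" by (rule GG_summable[OF assms(1) s1])
    show "summable (\<lambda>n. B * r ^ n)"
      using assms r0 by (intro summable_mult summable_geometric) auto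
  qed
  also have "\<dots> = B / (1 - r)"
    using assms r0 by (simp add: suminf_mult suminf_geometric[of r] divide_inverse)
  finally show ?thesis unfolding B_def .
qed

lemma GG_fun_eq:
  assumes "norm p < 1" "norm s < 1"
  shows "GG a p s = 1 + s * GG a p s - a * s * GG a p (s * p)"
proof -
  have sp: "norm (s * p) < 1" using assms
  proof -
    have "norm s * norm p \<le> norm s" using assms by (intro mult_left_le) auto
    thus ?thesis using assms by (simp add: norm_mult)
  qed
  have "(\<lambda>n. qpoch a p (Suc n) * s ^ Suc n) sums (s * GG a p s - a * s * GG a p (s * p))"
  proof -
    have "(\<lambda>n. s * (qpoch a p n * s ^ n) - a * s * (qpoch a p n * (s * p) ^ n)) sums (s * GG a p s - a * s * GG a p (s * p))"
      by (intro sums_diff sums_mult GG_sums assms sp)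
    moreover have "s * (qpoch a p n * s ^ n) - a * s * (qpoch a p n * (s * p) ^ n) = qpoch a p (Suc n) * s ^ Suc n" for n
      by (simp add: qpoch_Suc power_mult_distrib algebra_simps)
    ultimately show ?thesis by simp
  qed
  hence "(\<lambda>n. qpoch a p n * s ^ n) sums (s * GG a p s - a * s * GG a p (s * p) + 1)"
    by (subst (asm) sums_Suc_iff) (simp add: qpoch_def)
  from sums_unique2[OF GG_sums[OF assms] this] show ?thesis by (simp add: algebra_simps)
qed



definition cc :: "complex \<Rightarrow> complex \<Rightarrow> complex \<Rightarrow> nat \<Rightarrow> complex" where
  "cc a p t k = (-a*t)^k * (\<Prod>j<k. p^j) / qpoch t p (Suc k)"

lemma norm_tp:
  fixes t p :: complex
  assumes "norm p < 1"
  shows "norm (t * p ^ N) \<le> norm t"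
proof -
  have "norm p ^ N \<le> 1" using assms by (simp add: power_le_one)
  from mult_left_le[OF this norm_ge_zero[of t]] show ?thesis by (simp add: norm_mult norm_power)
qed

lemma GG_iter:
  assumes p: "norm p < 1" and t: "norm t < 1"
  shows "GG a p t = (\<Sum>k<N. cc a p t k)
     + (-a*t)^N * (\<Prod>j<N. p^j) / qpoch t p N * GG a p (t * p^N)"
proof (induction N)
  case 0
  then show ?case by (simp add: qpoch_def)
next
  case (Suc N)
  define s where "s = t * p ^ N"
  define X where "X = (-a*t)^N * (\<Prod>j<N. p^j)"
  define Q where "Q = qpoch t p N"
  have s1: "norm s < 1" using norm_tp[OF p, of t N] t unfolding s_def by linarith
  have Q0: "Q \<noteq> 0" unfolding Q_def by (rule qpoch_nz[OF p t])
  have Q1: "qpoch t p (Suc N) = Q * (1 - s)" unfolding Q_def s_def by (simp add: qpoch_Suc)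
  have Q10: "Q * (1 - s) \<noteq> 0" using qpoch_nz[OF p t, of "Suc N"] Q1 by simp
  hence s0: "1 - s \<noteq> 0" by simp
  have fe: "GG a p s = 1 + s * GG a p s - a * s * GG a p (s * p)" by (rule GG_fun_eq[OF p s1])
  have G: "GG a p s = (1 - a * s * GG a p (s * p)) / (1 - s)"
    using fe s0 by (simp add: eq_divide_eq algebra_simps)
  have sp: "s * p = t * p ^ Suc N" unfolding s_def by simp
  have X1: "(-a*t)^Suc N * (\<Prod>j<Suc N. p^j) = - X * a * s"
    unfolding X_def s_def by (simp add: algebra_simps)
  have cN: "cc a p t N = X / (Q * (1 - s))" unfolding cc_def X_def Q1 ..
  have "X / Q * GG a p s = X / (Q * (1 - s)) + (- X * a * s) / (Q * (1 - s)) * GG a p (s * p)"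
    using Q0 s0 unfolding G by (simp add: add_divide_distrib diff_divide_distrib algebra_simps)
  hence step: "X / Q * GG a p s = cc a p t N + (-a*t)^Suc N * (\<Prod>j<Suc N. p^j) / qpoch t p (Suc N) * GG a p (t * p ^ Suc N)"
    unfolding X1 Q1 cN sp[symmetric] by simp
  have IH: "GG a p t = (\<Sum>k<N. cc a p t k) + X / Q * GG a p s"
    using Suc.IH unfolding X_def Q_def s_def .
  show ?case using IH step by simp
qed

lemma half_lemma: "(A::real) > 0 \<Longrightarrow> A * (c / (2 * A)) = c / 2"
  by simp

lemma cc_summable:
  assumes p: "norm p < 1" and t: "norm t < 1"
  shows "summable (cc a p t)"
proof -
  define e where "e = (1 - norm t) / (2 * (norm a * norm t + 1))"
  have e0: "e > 0" using t unfolding e_def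
    by (intro divide_pos_pos) (auto intro!: add_nonneg_pos)
  have "(\<lambda>k. norm p ^ k) \<longlonglongrightarrow> 0" using p by (simp add: LIMSEQ_power_zero)
  hence "eventually (\<lambda>k. norm p ^ k < e) sequentially" using e0 by (rule order_tendstoD)
  then obtain N where N: "\<And>k. k \<ge> N \<Longrightarrow> norm p ^ k < e" by (auto simp: eventually_sequentially)
  show ?thesis
  proof (rule summable_ratio_test[where c="1/2" and N=N])
    fix k assume k: "k \<ge> N"
    define Q where "Q = qpoch t p (Suc k)"
    define u where "u = t * p ^ Suc k"
    have Q2: "qpoch t p (Suc (Suc k)) = Q * (1 - u)" unfolding Q_def u_def by (simp add: qpoch_Suc)
    have Q0: "Q \<noteq> 0" unfolding Q_def by (rule qpoch_nz[OF p t])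
    have un: "norm u \<le> norm t" unfolding u_def by (rule norm_tp[OF p])
    have u1: "norm (1 - u) \<ge> 1 - norm t"
      using norm_triangle_ineq2[of 1 u] un by simp
    have u0: "1 - u \<noteq> 0" using u1 t by auto
    have eq: "cc a p t (Suc k) = cc a p t k * ((-a*t*p^k) / (1 - u))"
    proof -
      have "(-a*t)^Suc k * (\<Prod>j<Suc k. p^j) = ((-a*t)^k * (\<Prod>j<k. p^j)) * (-a*t) * p^k"
        by (simp add: algebra_simps)
      thus ?thesis unfolding cc_def Q_def[symmetric] Q2 using Q0 u0 by simp
    qed
    have "norm ((-a*t*p^k) / (1 - u)) = norm a * norm t * norm p ^ k / norm (1 - u)"
      by (simp add: norm_mult norm_divide norm_power)
    also have "\<dots> \<le> norm a * norm t * norm p ^ k / (1 - norm t)"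
      using u1 t by (intro divide_left_mono) (auto intro!: mult_pos_pos)
    also have "\<dots> \<le> (norm a * norm t + 1) * e / (1 - norm t)"
      using N[OF k] t by (intro divide_right_mono mult_mono) auto
    also have "\<dots> = 1/2"
    proof -
      have "norm a * norm t + 1 > 0" by (simp add: add_nonneg_pos)
      moreover have "1 - norm t > 0" using t by simp
      ultimately have "(norm a * norm t + 1) * e = (1 - norm t) / 2"
        unfolding e_def by (intro half_lemma) simp
      thus ?thesis using t by simp
    qed
    finally have r: "norm ((-a*t*p^k) / (1 - u)) \<le> 1/2" .
    show "norm (cc a p t (Suc k)) \<le> 1/2 * norm (cc a p t k)"
    proof -
      have "norm (cc a p t (Suc k)) = norm (cc a p t k) * norm ((-a*t*p^k) / (1 - u))"
        unfolding eq norm_mult ..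
      also have "\<dots> \<le> norm (cc a p t k) * (1/2)" by (rule mult_left_mono[OF r]) simp
      finally show ?thesis by (simp add: mult.commute)
    qed
  qed simp
qed

lemma cc_sums:
  assumes p: "norm p < 1" and t: "norm t < 1"
  shows "cc a p t sums GG a p t"
proof -
  define B where "B = exp (norm a / (1 - norm p)) / (1 - norm t)"
  define R where "R N = (-a*t)^N * (\<Prod>j<N. p^j) / qpoch t p N * GG a p (t * p^N)" for N
  have c0: "cc a p t \<longlonglongrightarrow> 0" by (rule summable_LIMSEQ_zero[OF cc_summable[OF p t]])
  have bnd: "norm (R N) \<le> norm (cc a p t N) * (2 * B)" for N
  proof -
    have Q1: "qpoch t p (Suc N) = qpoch t p N * (1 - t * p^N)" by (simp add: qpoch_Suc)
    have Q0: "qpoch t p (Suc N) \<noteq> 0" by (rule qpoch_nz[OF p t])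
    have Rn: "R N = cc a p t N * (1 - t * p^N) * GG a p (t * p^N)"
      unfolding R_def cc_def Q1 using Q0 Q1 qpoch_nz[OF p t, of N] by simp
    have n1: "norm (1 - t * p^N) \<le> 2"
      using norm_triangle_ineq4[of 1 "t * p^N"] norm_tp[OF p, of t N] t by simp
    have n2: "norm (GG a p (t * p^N)) \<le> B"
      unfolding B_def by (rule GG_bound[OF p norm_tp[OF p] t])
    show ?thesis unfolding Rn norm_mult using n1 n2
      by (simp add: mult.assoc mult_left_mono mult_mono)
  qed
  have "(\<lambda>N. norm (cc a p t N) * (2 * B)) \<longlonglongrightarrow> 0"
    using c0 by (simp add: tendsto_mult_left_zero tendsto_norm_zero)
  hence R0: "R \<longlonglongrightarrow> 0" by (rule Lim_null_comparison[rotated]) (use bnd in auto)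
  have "(\<lambda>N. GG a p t - R N) \<longlonglongrightarrow> GG a p t - 0" by (intro tendsto_intros R0)
  moreover have "(\<Sum>k<N. cc a p t k) = GG a p t - R N" for N
    using GG_iter[OF p t, of a N] unfolding R_def by simp
  ultimately show ?thesis unfolding sums_def by simp
qed

lemma pow_prod: "(\<Prod>j<k. ((q::complex)^2)^j) * q^(2*k) = q^(k^2+k)"
proof (induction k)
  case 0 then show ?case by simp
next
  case (Suc k)
  have a1: "(\<Prod>j<Suc k. (q^2)^j) = (\<Prod>j<k. (q^2)^j) * q^(2*k)" by (simp add: power_mult)
  have a2: "q^(2*Suc k) = q^(2*k+2)" by simp
  have "(\<Prod>j<Suc k. (q^2)^j) * q^(2*Suc k) = ((\<Prod>j<k. (q^2)^j) * q^(2*k)) * q^(2*k+2)"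
    unfolding a1 a2 by (simp only: mult.assoc)
  also have "\<dots> = q^(k^2+k+(2*k+2))" unfolding Suc.IH by (simp only: power_add)
  also have "k^2+k+(2*k+2) = (Suc k)^2 + Suc k" by (simp add: power2_eq_square)
  finally show ?case .
qed

theorem theorem1p2:
  fixes z q :: complex
  assumes "norm q < 1"
  shows "summable (\<lambda>n. z ^ n * q ^ (n\<^sup>2 + n) / qpoch (- q) (q\<^sup>2) (n + 1))
         \<and> (\<lambda>n. qpoch (z * q) (q\<^sup>2) n * (- q) ^ n) sums nu1 z q"
proof -
  have p: "norm (q^2) < 1" using assms by (simp add: norm_power power_less_one_iff)
  have t: "norm (-q) < 1" using assms by simp
  have ceq: "cc (z*q) (q^2) (-q) = (\<lambda>n. z ^ n * q ^ (n\<^sup>2 + n) / qpoch (- q) (q\<^sup>2) (n + 1))"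
  proof
    fix n
    have "(-(z*q)*(-q))^n * (\<Prod>j<n. (q^2)^j) = z^n * ((\<Prod>j<n. (q^2)^j) * q^(2*n))"
      by (simp add: power_mult_distrib power_mult algebra_simps power2_eq_square)
    also have "\<dots> = z^n * q^(n^2+n)" by (simp add: pow_prod)
    finally show "cc (z*q) (q^2) (-q) n = z ^ n * q ^ (n\<^sup>2 + n) / qpoch (- q) (q\<^sup>2) (n + 1)"
      unfolding cc_def by simp
  qed
  have S: "cc (z*q) (q^2) (-q) sums GG (z*q) (q^2) (-q)" by (rule cc_sums[OF p t])
  have "nu1 z q = GG (z*q) (q^2) (-q)"
    unfolding nu1_def ceq[symmetric] using S by (simp add: sums_iff)
  then show ?thesis using S GG_sums[OF p t, of "z*q"] unfolding ceq by (auto simp: sums_iff)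
qed

end
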